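(* Let $G=(V,E)$ be a directed graph with real edge weights and no cycle of negative or zero weight, and let $x_1,y_1,x_2,y_2\in V$. Then $$F_{\mathrm{disj}}(x_1,y_1,x_2,y_2)=F(x_1,y_1)F(x_2,y_2)-\sum_{v\in V\setminus(\{x_1,y_1\}\cap\{x_2,y_2\})}D_v(x_1,y_1,x_2,y_2).$$
   Context: Introduce an indeterminate $z_e$ per edge; polynomials have coefficients in a field of characteristic two. For a simple path $P$, $f(P)$ is the product of $z_e$ over its edges ($1$ for a single vertex). $\Pi(x,y)$ is the set of shortest $x$–$y$ paths and $F(x,y)=\sum_{P\in\Pi(x,y)}f(P)$. Paths from $x_1$ to $y_1$ and from $x_2$ to $y_2$ are internally vertex-disjoint if they share no vertex outside $\{x_1,y_1\}\cap\{x_2,y_2\}$. $P[x,y]$ denotes the subpath from $x$ to $y$. $F_{\mathrm{disj}}(x_1,y_1,x_2,y_2)=\sum f(P_1)f(P_2)$ over internally vertex-disjoint pairs $(P_1,P_2)\in\Pi(x_1,y_1)\times\Pi(x_2,y_2)$. $D_v(x_1,y_1,x_2,y_2)=\sum f(P_1)f(P_2)$ over pairs $(P_1,P_2)\in\Pi(x_1,y_1)\times\Pi(x_2,y_2)$ such that $v\in V(P_1)\cap V(P_2)$ and $P_1[x_1,v]$ is internally vertex-disjoint both from $P_2[x_2,v]$ and from $P_2[v,y_2]$. *)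

theory Defs
  imports Complex_Main "HOL-Library.Poly_Mapping"
begin

text \<open>Polynomials over a field 'k (of characteristic two) in indeterminates z_e, e an edge,
  represented as Poly_Mapping from monomials (edge to nat maps) to coefficients.\<close>

type_synonym ('v,'k) epoly = "(('v \<times> 'v) \<Rightarrow>\<^sub>0 nat) \<Rightarrow>\<^sub>0 'k"

definition zvar :: "'v \<times> 'v \<Rightarrow> ('v,'k::comm_ring_1) epoly" where
  "zvar e = Poly_Mapping.single (Poly_Mapping.single e 1) 1"

definition is_path :: "('v \<times> 'v) set \<Rightarrow> 'v list \<Rightarrow> 'v \<Rightarrow> 'v \<Rightarrow> bool" where
  "is_path E P x y \<longleftrightarrow> P \<noteq> [] \<and> hd P = x \<and> last P = y \<and> distinct P \<and>
     (\<forall>i. Suc i < length P \<longrightarrow> (P ! i, P ! Suc i) \<in> E)"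

definition path_edges :: "'v list \<Rightarrow> ('v \<times> 'v) list" where
  "path_edges P = zip P (tl P)"

definition pweight :: "('v \<times> 'v \<Rightarrow> real) \<Rightarrow> 'v list \<Rightarrow> real" where
  "pweight w P = sum_list (map w (path_edges P))"

text \<open>Directed cycle v0 ... vk v0 (k \<ge> 0, loops allowed) and its weight.\<close>
definition is_cycle :: "('v \<times> 'v) set \<Rightarrow> 'v list \<Rightarrow> bool" where
  "is_cycle E C \<longleftrightarrow> C \<noteq> [] \<and> is_path E C (hd C) (last C) \<and> (last C, hd C) \<in> E"

definition cweight :: "('v \<times> 'v \<Rightarrow> real) \<Rightarrow> 'v list \<Rightarrow> real" where
  "cweight w C = pweight w C + w (last C, hd C)"

definition Pi_sp :: "('v \<times> 'v) set \<Rightarrow> ('v \<times> 'v \<Rightarrow> real) \<Rightarrow> 'v \<Rightarrow> 'v \<Rightarrow> 'v list set" where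
  "Pi_sp E w x y = {P. is_path E P x y \<and> (\<forall>Q. is_path E Q x y \<longrightarrow> pweight w P \<le> pweight w Q)}"

definition fP :: "'v list \<Rightarrow> ('v,'k::comm_ring_1) epoly" where
  "fP P = prod_list (map zvar (path_edges P))"

definition Fsp :: "('v \<times> 'v) set \<Rightarrow> ('v \<times> 'v \<Rightarrow> real) \<Rightarrow> 'v \<Rightarrow> 'v \<Rightarrow> ('v,'k::comm_ring_1) epoly" where
  "Fsp E w x y = (\<Sum>P\<in>Pi_sp E w x y. fP P)"

definition int_disj :: "'v \<Rightarrow> 'v \<Rightarrow> 'v \<Rightarrow> 'v \<Rightarrow> 'v list \<Rightarrow> 'v list \<Rightarrow> bool" where
  "int_disj x1 y1 x2 y2 P1 P2 \<longleftrightarrow> set P1 \<inter> set P2 \<subseteq> {x1, y1} \<inter> {x2, y2}"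

definition sub_to :: "'v list \<Rightarrow> 'v \<Rightarrow> 'v list" where
  "sub_to P v = takeWhile (\<lambda>u. u \<noteq> v) P @ [v]"

definition sub_from :: "'v list \<Rightarrow> 'v \<Rightarrow> 'v list" where
  "sub_from P v = dropWhile (\<lambda>u. u \<noteq> v) P"

definition Fdisj :: "('v \<times> 'v) set \<Rightarrow> ('v \<times> 'v \<Rightarrow> real) \<Rightarrow> 'v \<Rightarrow> 'v \<Rightarrow> 'v \<Rightarrow> 'v \<Rightarrow> ('v,'k::comm_ring_1) epoly" where
  "Fdisj E w x1 y1 x2 y2 =
     (\<Sum>(P1,P2)\<in>{(P1,P2). P1 \<in> Pi_sp E w x1 y1 \<and> P2 \<in> Pi_sp E w x2 y2 \<and> int_disj x1 y1 x2 y2 P1 P2}.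
        fP P1 * fP P2)"

definition Dv :: "('v \<times> 'v) set \<Rightarrow> ('v \<times> 'v \<Rightarrow> real) \<Rightarrow> 'v \<Rightarrow> 'v \<Rightarrow> 'v \<Rightarrow> 'v \<Rightarrow> 'v \<Rightarrow> ('v,'k::comm_ring_1) epoly" where
  "Dv E w v x1 y1 x2 y2 =
     (\<Sum>(P1,P2)\<in>{(P1,P2). P1 \<in> Pi_sp E w x1 y1 \<and> P2 \<in> Pi_sp E w x2 y2 \<and>
          v \<in> set P1 \<inter> set P2 \<and>
          int_disj x1 v x2 v (sub_to P1 v) (sub_to P2 v) \<and>
          int_disj x1 v v y2 (sub_to P1 v) (sub_from P2 v)}.
        fP P1 * fP P2)"

end

theory Submission
  imports Defs
begin
lemma path_in_V:
  assumes "is_path E P x y" "E \<subseteq> V \<times> V" "x \<in> V"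
  shows "set P \<subseteq> V"
proof
  fix u assume "u \<in> set P"
  then obtain i where i: "i < length P" "P ! i = u" by (auto simp: in_set_conv_nth)
  have ne: "P \<noteq> []" "hd P = x" using assms(1) by (auto simp: is_path_def)
  show "u \<in> V"
  proof (cases i)
    case 0 then show ?thesis using ne assms(3) i by (simp add: hd_conv_nth)
  next
    case (Suc j)
    have "\<forall>k. Suc k < length P \<longrightarrow> (P ! k, P ! Suc k) \<in> E" using assms(1) by (simp add: is_path_def)
    then have "(P ! j, P ! i) \<in> E" using i Suc by blast
    then show ?thesis using assms(2) i by auto
  qed
qed

lemma finite_Pi:
  assumes "finite V" "E \<subseteq> V \<times> V" "x \<in> V"
  shows "finite (Pi_sp E w x y)"
proof -
  have "Pi_sp E w x y \<subseteq> {xs. set xs \<subseteq> V \<and> length xs \<le> card V}"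
  proof
    fix P assume "P \<in> Pi_sp E w x y"
    then have p: "is_path E P x y" by (simp add: Pi_sp_def)
    then have s: "set P \<subseteq> V" using path_in_V[OF p assms(2,3)] by blast
    have d: "distinct P" using p by (simp add: is_path_def)
    have "length P = card (set P)" using distinct_card[OF d] by simp
    also have "\<dots> \<le> card V" using card_mono[OF assms(1) s] .
    finally show "P \<in> {xs. set xs \<subseteq> V \<and> length xs \<le> card V}" using s by simp
  qed
  moreover have "finite {xs. set xs \<subseteq> V \<and> length xs \<le> card V}"
    by (rule finite_lists_length_le[OF assms(1)])
  ultimately show ?thesis by (rule finite_subset)
qed
lemma tw_not_last:
  "distinct P \<Longrightarrow> v \<in> set P \<Longrightarrow> u \<in> set (takeWhile (\<lambda>a. a \<noteq> v) P) \<Longrightarrow> u \<noteq> last P"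
proof (induction P)
  case Nil then show ?case by simp
next
  case (Cons a rest)
  show ?case
  proof (cases "a = v")
    case True then show ?thesis using Cons.prems by simp
  next
    case False
    then have v: "v \<in> set rest" and r: "rest \<noteq> []" using Cons.prems by auto
    have "u = a \<or> u \<in> set (takeWhile (\<lambda>a. a \<noteq> v) rest)" using Cons.prems False by auto
    then show ?thesis
    proof
      assume "u = a" then show ?thesis using Cons.prems r last_in_set[OF r] by auto
    next
      assume "u \<in> set (takeWhile (\<lambda>a. a \<noteq> v) rest)"
      then show ?thesis using Cons.IH Cons.prems v r by auto
    qed
  qed
qed

lemma dw_hd:
  "distinct P \<Longrightarrow> P \<noteq> [] \<Longrightarrow> u \<in> set (dropWhile (\<lambda>a. a \<noteq> v) P) \<Longrightarrow> u = hd P \<Longrightarrow> u = v"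
  by (cases P) (auto split: if_splits dest: set_dropWhileD)

lemma tw_order:
  "v \<in> set P \<Longrightarrow> v' \<in> set P \<Longrightarrow> v \<noteq> v' \<Longrightarrow>
    v' \<in> set (takeWhile (\<lambda>a. a \<noteq> v) P) \<or> v \<in> set (takeWhile (\<lambda>a. a \<noteq> v') P)"
  by (induction P) auto

lemma tw_first:
  "\<exists>v\<in>set P. Q v \<Longrightarrow> \<exists>v\<in>set P. Q v \<and> (\<forall>u\<in>set (takeWhile (\<lambda>a. a \<noteq> v) P). \<not> Q u)"
proof (induction P)
  case Nil then show ?case by simp
next
  case (Cons a rest)
  show ?case
  proof (cases "Q a")
    case True then show ?thesis by auto
  next
    case False
    then obtain v where "v \<in> set rest" "Q v" "\<forall>u\<in>set (takeWhile (\<lambda>a. a \<noteq> v) rest). \<not> Q u"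
      using Cons by auto
    moreover have "v \<noteq> a" using False \<open>Q v\<close> by auto
    ultimately show ?thesis using False by auto
  qed
qed

lemma split_P:
  "v \<in> set P \<Longrightarrow> set P = set (sub_to P v) \<union> set (sub_from P v)"
proof -
  assume v: "v \<in> set P"
  have "set P = set (takeWhile (\<lambda>u. u \<noteq> v) P) \<union> set (dropWhile (\<lambda>u. u \<noteq> v) P)"
    by (metis set_append takeWhile_dropWhile_id)
  then show ?thesis using v by (auto simp: sub_to_def sub_from_def)
qed

lemma charC:
  assumes p1: "distinct P1" "hd P1 = x1" "last P1 = y1" "P1 \<noteq> []"
    and p2: "distinct P2" "hd P2 = x2" "last P2 = y2" "P2 \<noteq> []"
    and v1: "v \<in> set P1" and v2: "v \<in> set P2"
  shows "(int_disj x1 v x2 v (sub_to P1 v) (sub_to P2 v) \<and>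
          int_disj x1 v v y2 (sub_to P1 v) (sub_from P2 v)) \<longleftrightarrow>
         (\<forall>u\<in>set (takeWhile (\<lambda>a. a \<noteq> v) P1). u \<in> set P2 \<longrightarrow> u \<in> {x1,y1} \<inter> {x2,y2})"
proof
  assume H: "int_disj x1 v x2 v (sub_to P1 v) (sub_to P2 v) \<and>
          int_disj x1 v v y2 (sub_to P1 v) (sub_from P2 v)"
  show "\<forall>u\<in>set (takeWhile (\<lambda>a. a \<noteq> v) P1). u \<in> set P2 \<longrightarrow> u \<in> {x1,y1} \<inter> {x2,y2}"
  proof (intro ballI impI)
    fix u assume u: "u \<in> set (takeWhile (\<lambda>a. a \<noteq> v) P1)" "u \<in> set P2"
    then have uv: "u \<noteq> v" by (auto dest: set_takeWhileD)
    have u1: "u \<in> set (sub_to P1 v)" using u by (simp add: sub_to_def)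
    have "u \<in> set (sub_to P2 v) \<or> u \<in> set (sub_from P2 v)" using split_P[OF v2] u by auto
    then show "u \<in> {x1,y1} \<inter> {x2,y2}" using H u1 uv by (auto simp: int_disj_def)
  qed
next
  assume H: "\<forall>u\<in>set (takeWhile (\<lambda>a. a \<noteq> v) P1). u \<in> set P2 \<longrightarrow> u \<in> {x1,y1} \<inter> {x2,y2}"
  have A: "u = x1" if "u \<in> set (takeWhile (\<lambda>a. a \<noteq> v) P1)" "u \<in> set P2" for u
  proof -
    have "u \<noteq> y1" using tw_not_last[OF p1(1) v1 that(1)] p1 by simp
    then show ?thesis using H that by auto
  qed
  show "int_disj x1 v x2 v (sub_to P1 v) (sub_to P2 v) \<and>
          int_disj x1 v v y2 (sub_to P1 v) (sub_from P2 v)"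
    unfolding int_disj_def
  proof (intro conjI subsetI)
    fix u assume u: "u \<in> set (sub_to P1 v) \<inter> set (sub_to P2 v)"
    show "u \<in> {x1, v} \<inter> {x2, v}"
    proof (cases "u = v")
      case True then show ?thesis by simp
    next
      case False
      then have t1: "u \<in> set (takeWhile (\<lambda>a. a \<noteq> v) P1)" and t2: "u \<in> set (takeWhile (\<lambda>a. a \<noteq> v) P2)"
        using u by (auto simp: sub_to_def)
      have uP2: "u \<in> set P2" using t2 by (auto dest: set_takeWhileD)
      have "u = x1" using A t1 uP2 by blast
      moreover have "u \<in> {x2,y2}" using H t1 uP2 by auto
      moreover have "u \<noteq> y2" using tw_not_last[OF p2(1) v2 t2] p2 by simp
      ultimately show ?thesis by auto
    qed
  next
    fix u assume u: "u \<in> set (sub_to P1 v) \<inter> set (sub_from P2 v)"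
    show "u \<in> {x1, v} \<inter> {v, y2}"
    proof (cases "u = v")
      case True then show ?thesis by simp
    next
      case False
      then have t1: "u \<in> set (takeWhile (\<lambda>a. a \<noteq> v) P1)" and t2: "u \<in> set (dropWhile (\<lambda>a. a \<noteq> v) P2)"
        using u by (auto simp: sub_to_def sub_from_def)
      have uP2: "u \<in> set P2" using t2 by (auto dest: set_dropWhileD)
      have "u = x1" using A t1 uP2 by blast
      moreover have "u \<in> {x2,y2}" using H t1 uP2 by auto
      moreover have "u \<noteq> x2" using dw_hd[OF p2(1) p2(4) t2] p2 False by auto
      ultimately show ?thesis by auto
    qed
  qed
qed

theorem lemma9:
  fixes V :: "'v set" and E :: "('v \<times> 'v) set" and w :: "'v \<times> 'v \<Rightarrow> real"
    and x1 y1 x2 y2 :: 'v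
  assumes "finite V" and "E \<subseteq> V \<times> V"
    and "\<And>C. is_cycle E C \<Longrightarrow> cweight w C > 0"
    and "x1 \<in> V" "y1 \<in> V" "x2 \<in> V" "y2 \<in> V"
    and "CHAR('k::field) = 2"
  shows "(Fdisj E w x1 y1 x2 y2 :: ('v,'k) epoly) =
           Fsp E w x1 y1 * Fsp E w x2 y2
           - (\<Sum>v\<in>V - ({x1, y1} \<inter> {x2, y2}). Dv E w v x1 y1 x2 y2)"
proof -
  let ?S = "{x1, y1} \<inter> {x2, y2}"
  let ?A = "Pi_sp E w x1 y1"
  let ?B = "Pi_sp E w x2 y2"
  let ?g = "\<lambda>(P1,P2). (fP P1 * fP P2 :: ('v,'k) epoly)"
  define T where "T v = {(P1,P2). P1 \<in> ?A \<and> P2 \<in> ?B \<and>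
          v \<in> set P1 \<inter> set P2 \<and>
          int_disj x1 v x2 v (sub_to P1 v) (sub_to P2 v) \<and>
          int_disj x1 v v y2 (sub_to P1 v) (sub_from P2 v)}" for v
  define D where "D = {(P1,P2). P1 \<in> ?A \<and> P2 \<in> ?B \<and> int_disj x1 y1 x2 y2 P1 P2}"
  define N where "N = {(P1,P2). P1 \<in> ?A \<and> P2 \<in> ?B \<and> \<not> int_disj x1 y1 x2 y2 P1 P2}"
  have fA: "finite ?A" by (rule finite_Pi[OF assms(1,2,4)])
  have fB: "finite ?B" by (rule finite_Pi[OF assms(1,2,6)])
  have fAB: "finite (?A \<times> ?B)" using fA fB by simp
  have prod: "Fsp E w x1 y1 * Fsp E w x2 y2 = sum ?g (?A \<times> ?B)"
    unfolding Fsp_def sum_product sum.cartesian_product by (simp only: case_prod_unfold)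
  have AB: "?A \<times> ?B = D \<union> N" by (auto simp: D_def N_def)
  have DN: "D \<inter> N = {}" by (auto simp: D_def N_def)
  have fD: "finite D" using fAB AB by (metis finite_Un)
  have fN: "finite N" using fAB AB by (metis finite_Un)
  have split: "sum ?g (?A \<times> ?B) = sum ?g D + sum ?g N"
    unfolding AB by (rule sum.union_disjoint[OF fD fN DN])
  have disj: "Fdisj E w x1 y1 x2 y2 = sum ?g D" by (simp add: Fdisj_def D_def)
  have pathA: "distinct P \<and> hd P = x \<and> last P = y \<and> P \<noteq> []" if "P \<in> Pi_sp E w x y" for P x y
    using that by (simp add: Pi_sp_def is_path_def)
  have key: "\<forall>u\<in>set (takeWhile (\<lambda>a. a \<noteq> v) P1). u \<in> set P2 \<longrightarrow> u \<in> ?S"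
    if "(P1,P2) \<in> T v" for P1 P2 v
  proof -
    have "P1 \<in> ?A" "P2 \<in> ?B" "v \<in> set P1" "v \<in> set P2" using that by (auto simp: T_def)
    then show ?thesis using charC[of P1 x1 y1 P2 x2 y2 v] pathA that by (auto simp: T_def)
  qed
  have TN: "\<Union>(T ` (V - ?S)) = N"
  proof
    show "\<Union>(T ` (V - ?S)) \<subseteq> N" by (auto simp: T_def N_def int_disj_def)
  next
    show "N \<subseteq> \<Union>(T ` (V - ?S))"
    proof
      fix p assume p: "p \<in> N"
      obtain P1 P2 where pp: "p = (P1,P2)" by (cases p)
      have P1: "P1 \<in> ?A" and P2: "P2 \<in> ?B" and nd: "\<not> int_disj x1 y1 x2 y2 P1 P2"
        using p pp by (auto simp: N_def)
      have "\<exists>v\<in>set P1. v \<in> set P2 \<and> v \<notin> ?S" using nd by (auto simp: int_disj_def)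
      then obtain v where v: "v \<in> set P1" "v \<in> set P2" "v \<notin> ?S"
        and first: "\<forall>u\<in>set (takeWhile (\<lambda>a. a \<noteq> v) P1). \<not> (u \<in> set P2 \<and> u \<notin> ?S)"
        using tw_first[of P1 "\<lambda>u. u \<in> set P2 \<and> u \<notin> ?S"] by blast
      have c: "int_disj x1 v x2 v (sub_to P1 v) (sub_to P2 v) \<and>
          int_disj x1 v v y2 (sub_to P1 v) (sub_from P2 v)"
        using charC[of P1 x1 y1 P2 x2 y2 v] pathA[OF P1] pathA[OF P2] v first by blast
      have "is_path E P1 x1 y1" using P1 by (simp add: Pi_sp_def)
      then have "set P1 \<subseteq> V" by (rule path_in_V[OF _ assms(2,4)])
      then have "v \<in> V - ?S" using v by auto
      moreover have "p \<in> T v" using pp P1 P2 v c by (auto simp: T_def)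
      ultimately show "p \<in> \<Union>(T ` (V - ?S))" by blast
    qed
  qed
  have Tdisj: "T i \<inter> T j = {}" if "i \<in> V - ?S" "j \<in> V - ?S" "i \<noteq> j" for i j
  proof (rule ccontr)
    assume "T i \<inter> T j \<noteq> {}"
    then obtain P1 P2 where a: "(P1,P2) \<in> T i" "(P1,P2) \<in> T j" by auto
    have "i \<in> set P1" "j \<in> set P1" "i \<in> set P2" "j \<in> set P2" using a by (auto simp: T_def)
    then show False using tw_order[of i P1 j] key[OF a(1)] key[OF a(2)] that by auto
  qed
  have fT: "finite (T v)" for v
    by (rule finite_subset[OF _ fAB]) (auto simp: T_def)
  have "(\<Sum>v\<in>V - ?S. Dv E w v x1 y1 x2 y2 :: ('v,'k) epoly) = (\<Sum>v\<in>V - ?S. sum ?g (T v))"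
    by (simp add: Dv_def T_def)
  also have "\<dots> = sum ?g (\<Union>(T ` (V - ?S)))"
    by (rule sum.UNION_disjoint[symmetric]) (use assms(1) fT Tdisj in auto)
  also have "\<dots> = sum ?g N" using TN by simp
  finally have "(\<Sum>v\<in>V - ?S. Dv E w v x1 y1 x2 y2 :: ('v,'k) epoly) = sum ?g N" .
  then show ?thesis using prod split disj by simp
qed

end
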